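(* Let $\mathfrak{Q}\subset\mathbb{R}^2$ be open, $\phi\colon S^1\times\mathfrak{Q}\to\mathbb{R}$ smooth ($S^1=\mathbb{R}/\mathbb{Z}$, $\phi_t:=\phi(t,\cdot)$), and $\mathbf{A}$ a twisted-periodic vector potential on $\mathfrak{Q}$ (see context). Then $$(\mathbf{A}^\phi)_t:=\mathbf{A}_t+\int_0^t\nabla\phi_s\,ds$$ is again a twisted-periodic vector potential on $\mathfrak{Q}$. Moreover, a smooth map $t\mapsto q(t)\in\mathfrak{Q}$ solves the $(\mathbf{A},\phi)$-equation $$\ddot q=-\bigl(\mathrm{rot}\,\mathbf{A}_t(q)\bigr)J_0\dot q-\dot{\mathbf{A}}_t(q)-\nabla\phi_t(q)$$ if and only if it solves the $(\mathbf{A}^\phi,0)$-equation $$\ddot q=-\bigl(\mathrm{rot}\,(\mathbf{A}^\phi)_t(q)\bigr)J_0\dot q-\dot{(\mathbf{A}^\phi)}_t(q).$$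
   Context: A twisted-periodic vector potential on $\mathfrak{Q}$ is a smooth map $\mathbf{A}\colon\mathbb{R}\times\mathfrak{Q}\to\mathbb{R}^2$, $\mathbf{A}_t=(A^1_t,A^2_t):=\mathbf{A}(t,\cdot)$, such that for all $t$: $\dot{\mathbf{A}}_{t+1}=\dot{\mathbf{A}}_t$, $\mathrm{rot}\,\mathbf{A}_{t+1}=\mathrm{rot}\,\mathbf{A}_t$, and $\mathbf{A}_{t+1}-\mathbf{A}_t=\nabla f_t$ with $f_t=f(t,\cdot)$ for some smooth $f\colon\mathbb{R}\times\mathfrak{Q}\to\mathbb{R}$. Here the dot is $\partial_t$, $\mathrm{rot}\,\mathbf{A}_t:=\partial_{q_1}A^2_t-\partial_{q_2}A^1_t$, and $J_0=\begin{pmatrix}0&-1\\1&0\end{pmatrix}$. *)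

theory Defs
  imports "HOL-Analysis.Analysis"
begin

fun iter_dderiv :: "'a::real_normed_vector list \<Rightarrow> ('a \<Rightarrow> 'b::real_normed_vector) \<Rightarrow> 'a \<Rightarrow> 'b" where
  "iter_dderiv [] f = f"
| "iter_dderiv (v # vs) f = (\<lambda>x. frechet_derivative (iter_dderiv vs f) (at x) v)"

definition smooth_on :: "'a::real_normed_vector set \<Rightarrow> ('a \<Rightarrow> 'b::real_normed_vector) \<Rightarrow> bool" where
  "smooth_on S f \<longleftrightarrow> (\<forall>vs. iter_dderiv vs f differentiable_on S)"

definition grad :: "(real \<times> real \<Rightarrow> real) \<Rightarrow> real \<times> real \<Rightarrow> real \<times> real" where
  "grad g x = (frechet_derivative g (at x) (1, 0), frechet_derivative g (at x) (0, 1))"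

definition rot :: "(real \<times> real \<Rightarrow> real \<times> real) \<Rightarrow> real \<times> real \<Rightarrow> real" where
  "rot A x = frechet_derivative (\<lambda>y. snd (A y)) (at x) (1, 0)
           - frechet_derivative (\<lambda>y. fst (A y)) (at x) (0, 1)"

definition tdot :: "(real \<Rightarrow> real \<times> real \<Rightarrow> 'b::real_normed_vector) \<Rightarrow> real \<Rightarrow> real \<times> real \<Rightarrow> 'b" where
  "tdot A t x = vector_derivative (\<lambda>s. A s x) (at t)"

definition J0 :: "real \<times> real \<Rightarrow> real \<times> real" where
  "J0 v = (- snd v, fst v)"

definition oint :: "real \<Rightarrow> real \<Rightarrow> (real \<Rightarrow> 'b::euclidean_space) \<Rightarrow> 'b" where
  "oint a b f = (if a \<le> b then integral {a..b} f else - integral {b..a} f)"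

definition twisted_periodic_vp :: "(real \<times> real) set \<Rightarrow> (real \<Rightarrow> real \<times> real \<Rightarrow> real \<times> real) \<Rightarrow> bool" where
  "twisted_periodic_vp Q A \<longleftrightarrow>
     smooth_on (UNIV \<times> Q) (\<lambda>p. A (fst p) (snd p)) \<and>
     (\<forall>t. \<forall>x\<in>Q. tdot A (t + 1) x = tdot A t x) \<and>
     (\<forall>t. \<forall>x\<in>Q. rot (A (t + 1)) x = rot (A t) x) \<and>
     (\<exists>f :: real \<Rightarrow> real \<times> real \<Rightarrow> real.
        smooth_on (UNIV \<times> Q) (\<lambda>p. f (fst p) (snd p)) \<and>
        (\<forall>t. \<forall>x\<in>Q. A (t + 1) x - A t x = grad (f t) x))"

definition Aphi :: "(real \<Rightarrow> real \<times> real \<Rightarrow> real \<times> real) \<Rightarrow> (real \<Rightarrow> real \<times> real \<Rightarrow> real)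
                    \<Rightarrow> real \<Rightarrow> real \<times> real \<Rightarrow> real \<times> real" where
  "Aphi A \<phi> t x = A t x + oint 0 t (\<lambda>s. grad (\<phi> s) x)"

definition solves_eq :: "(real \<Rightarrow> real \<times> real \<Rightarrow> real \<times> real) \<Rightarrow> (real \<Rightarrow> real \<times> real \<Rightarrow> real)
                         \<Rightarrow> (real \<Rightarrow> real \<times> real) \<Rightarrow> real \<Rightarrow> bool" where
  "solves_eq A \<phi> q t \<longleftrightarrow>
     vector_derivative (\<lambda>s. vector_derivative q (at s)) (at t)
       = - (rot (A t) (q t)) *\<^sub>R J0 (vector_derivative q (at t)) - tdot A t (q t) - grad (\<phi> t) (q t)"

end

theory Submission
  imports Defs
begin


lemma fd_cong:
  assumes "open S" "x \<in> S" "\<And>y. y \<in> S \<Longrightarrow> f y = g y"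
  shows "frechet_derivative f (at x) = frechet_derivative g (at x)"
proof -
  have "\<And>D. (f has_derivative D) (at x) \<longleftrightarrow> (g has_derivative D) (at x)"
  proof
    fix D assume "(f has_derivative D) (at x)"
    then show "(g has_derivative D) (at x)"
      by (rule has_derivative_transform_within_open[OF _ assms(1,2)]) (rule assms(3))
  next
    fix D assume "(g has_derivative D) (at x)"
    then show "(f has_derivative D) (at x)"
      by (rule has_derivative_transform_within_open[OF _ assms(1,2)]) (rule assms(3)[symmetric])
  qed
  then show ?thesis unfolding frechet_derivative_def by simp
qed

lemma iter_cong:
  assumes "open S" "\<And>y. y \<in> S \<Longrightarrow> f y = g y"
  shows "x \<in> S \<Longrightarrow> iter_dderiv vs f x = iter_dderiv vs g x"
proof (induction vs arbitrary: x)
  case Nil then show ?case using assms by simp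
next
  case (Cons v vs)
  have "frechet_derivative (iter_dderiv vs f) (at x) = frechet_derivative (iter_dderiv vs g) (at x)"
    by (rule fd_cong[OF assms(1) Cons.prems]) (use Cons.IH in auto)
  then show ?case by simp
qed

lemma diff_on_cong:
  assumes "open S" "\<And>y. y \<in> S \<Longrightarrow> f y = g y" "f differentiable_on S"
  shows "g differentiable_on S"
  unfolding differentiable_on_eq_differentiable_at[OF assms(1)]
proof
  fix x assume x: "x \<in> S"
  then obtain D where "(f has_derivative D) (at x)"
    using assms(3) unfolding differentiable_on_eq_differentiable_at[OF assms(1)] differentiable_def by blast
  then have "(g has_derivative D) (at x)"
    by (rule has_derivative_transform_within_open[OF _ assms(1) x assms(2)])
  then show "g differentiable at x" unfolding differentiable_def by blast
qed

lemma smooth_cong: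
  assumes "open S" "\<And>y. y \<in> S \<Longrightarrow> f y = g y" "smooth_on S f"
  shows "smooth_on S g"
  unfolding smooth_on_def
proof
  fix vs
  show "iter_dderiv vs g differentiable_on S"
    by (rule diff_on_cong[OF assms(1) iter_cong[OF assms(1,2)]])
       (use assms(3) smooth_on_def in auto)
qed

lemma smooth_diff_at:
  assumes "smooth_on S f" "open S" "x \<in> S"
  shows "f differentiable at x"
proof -
  have "iter_dderiv [] f differentiable_on S" using assms(1) smooth_on_def by blast
  then show ?thesis using assms differentiable_on_eq_differentiable_at by auto
qed

lemma smooth_has_fd:
  assumes "smooth_on S f" "open S" "x \<in> S"
  shows "(f has_derivative frechet_derivative f (at x)) (at x)"
  using smooth_diff_at[OF assms] frechet_derivative_works by blast

lemma smooth_cont: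
  assumes "smooth_on S f" "open S"
  shows "continuous_on S f"
proof -
  have "iter_dderiv [] f differentiable_on S" using assms(1) smooth_on_def by blast
  then show ?thesis using differentiable_imp_continuous_on by auto
qed

lemma iter_snoc: "iter_dderiv (vs @ [w]) f = iter_dderiv vs (iter_dderiv [w] f)"
  by (induction vs) auto

lemma iter_append: "iter_dderiv (us @ vs) f = iter_dderiv us (iter_dderiv vs f)"
  by (induction us) auto

lemma smooth_dderiv:
  assumes "smooth_on S f"
  shows "smooth_on S (\<lambda>x. frechet_derivative f (at x) w)"
proof -
  have "(\<lambda>x. frechet_derivative f (at x) w) = iter_dderiv [w] f" by simp
  then show ?thesis using assms unfolding smooth_on_def by (metis iter_snoc)
qed

lemma smooth_linear:
  assumes "smooth_on S f" "open S" "bounded_linear L"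
  shows "smooth_on S (\<lambda>x. L (f x))"
proof -
  have sm: "smooth_on S (iter_dderiv vs f)" for vs using assms(1) unfolding smooth_on_def
    by (simp add: iter_append[symmetric])
  have eq: "x \<in> S \<Longrightarrow> iter_dderiv vs (\<lambda>x. L (f x)) x = L (iter_dderiv vs f x)" for vs x
  proof (induction vs arbitrary: x)
    case Nil then show ?case by simp
  next
    case (Cons v vs)
    have "frechet_derivative (iter_dderiv vs (\<lambda>x. L (f x))) (at x)
          = frechet_derivative (\<lambda>x. L (iter_dderiv vs f x)) (at x)"
      by (rule fd_cong[OF assms(2) Cons.prems]) (rule Cons.IH)
    also have "\<dots> = (\<lambda>h. L (frechet_derivative (iter_dderiv vs f) (at x) h))"
    proof -
      have "((\<lambda>x. L (iter_dderiv vs f x)) has_derivative (\<lambda>h. L (frechet_derivative (iter_dderiv vs f) (at x) h))) (at x)"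
        using bounded_linear.has_derivative[OF assms(3) smooth_has_fd[OF sm assms(2) Cons.prems]] .
      then show ?thesis by (rule frechet_derivative_at[symmetric])
    qed
    finally show ?case by simp
  qed
  show ?thesis unfolding smooth_on_def
  proof
    fix vs
    have d: "iter_dderiv vs f differentiable_on S"
      using assms(1) unfolding smooth_on_def by blast
    have "(\<lambda>x. L (iter_dderiv vs f x)) differentiable_on S"
      by (rule differentiable_on_compose[OF d]) (rule bounded_linear_imp_differentiable_on[OF assms(3)])
    then show "iter_dderiv vs (\<lambda>x. L (f x)) differentiable_on S"
      by (rule diff_on_cong[OF assms(2), rotated]) (simp add: eq)
  qed
qed



lemma oint_split:
  fixes g :: "real \<Rightarrow> 'b::euclidean_space"
  assumes "continuous_on {c..d} g" "a \<in> {c..d}" "u \<in> {c..d}"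
  shows "oint a u g = integral {c..u} g - integral {c..a} g"
proof (cases "a \<le> u")
  case True
  have "integral {c..a} g + integral {a..u} g = integral {c..u} g"
    by (rule Henstock_Kurzweil_Integration.integral_combine) (use assms True in \<open>auto intro!: integrable_continuous_real continuous_on_subset[OF assms(1)]\<close>)
  then show ?thesis using True unfolding oint_def by (simp add: algebra_simps)
next
  case False
  have "integral {c..u} g + integral {u..a} g = integral {c..a} g"
    by (rule Henstock_Kurzweil_Integration.integral_combine) (use assms False in \<open>auto intro!: integrable_continuous_real continuous_on_subset[OF assms(1)]\<close>)
  then show ?thesis using False unfolding oint_def by (simp add: algebra_simps)
qed

lemma oint_has_vd:
  fixes g :: "real \<Rightarrow> 'b::euclidean_space"
  assumes "continuous_on {c..d} g" "a \<in> {c..d}" "t \<in> {c<..<d}"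
  shows "((\<lambda>u. oint a u g) has_vector_derivative g t) (at t)"
proof -
  have "((\<lambda>u. integral {c..u} g) has_vector_derivative g t) (at t within {c..d})"
    using assms by (intro integral_has_vector_derivative) auto
  then have "((\<lambda>u. integral {c..u} g) has_vector_derivative g t) (at t)"
    using assms(3) by (simp add: at_within_Icc_at)
  then have "((\<lambda>u. integral {c..u} g - integral {c..a} g) has_vector_derivative g t - 0) (at t)"
    by (intro has_vector_derivative_diff) auto
  then have d: "((\<lambda>u. integral {c..u} g - integral {c..a} g) has_vector_derivative g t) (at t)"
    by simp
  have eq: "\<And>y. y \<in> {c<..<d} \<Longrightarrow> integral {c..y} g - integral {c..a} g = oint a y g"
  proof -
    fix y assume "y \<in> {c<..<d}"
    then have "y \<in> {c..d}" by simp
    then show "integral {c..y} g - integral {c..a} g = oint a y g"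
      using oint_split[OF assms(1,2)] by simp
  qed
  show ?thesis
    by (rule has_vector_derivative_transform_within_open[OF d open_greaterThanLessThan assms(3)]) (rule eq)
qed

lemma oint_has_vd_UNIV:
  fixes g :: "real \<Rightarrow> 'b::euclidean_space"
  assumes "continuous_on UNIV g"
  shows "((\<lambda>u. oint a u g) has_vector_derivative g t) (at t)"
proof (rule oint_has_vd[of "min a t - 1" "max a t + 1"])
  show "continuous_on {min a t - 1..max a t + 1} g"
    using assms by (rule continuous_on_subset) simp
qed auto

lemma oint_same [simp]: "oint a a g = 0"
  by (simp add: oint_def)

lemma oint_cong:
  assumes "\<And>s. s \<in> closed_segment a b \<Longrightarrow> f s = g s"
  shows "oint a b f = oint a b g"
  using assms unfolding oint_def closed_segment_eq_real_ivl
  by (auto intro!: integral_cong split: if_splits)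

lemma oint_linear:
  fixes g :: "real \<Rightarrow> 'b::euclidean_space" and L :: "'b \<Rightarrow> 'c::euclidean_space"
  assumes "bounded_linear L" "continuous_on (closed_segment a b) g"
  shows "L (oint a b g) = oint a b (\<lambda>s. L (g s))"
proof -
  have neg: "L (- y) = - L y" for y using linear_cmul[OF bounded_linear.linear[OF assms(1)], of "-1" y] by simp
  show ?thesis
proof (cases "a \<le> b")
  case True
  then have "g integrable_on {a..b}" using assms(2) integrable_continuous_closed_segment
    closed_segment_eq_real_ivl by metis
  then show ?thesis using True integral_linear[OF _ assms(1), of g "{a..b}"]
    by (simp add: oint_def o_def)
next
  case False
  then have "g integrable_on {b..a}" using assms(2) integrable_continuous_closed_segment
    closed_segment_eq_real_ivl by (metis closed_segment_commute)
  then show ?thesis using False integral_linear[OF _ assms(1), of g "{b..a}"]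
    by (simp add: oint_def o_def neg)
qed
qed

lemma oint_leibniz:
  fixes K :: "real \<Rightarrow> 'p::euclidean_space \<Rightarrow> 'b::euclidean_space"
    and KD :: "real \<Rightarrow> 'p \<Rightarrow> 'p \<Rightarrow>\<^sub>L 'b"
  assumes U: "open U" "y0 \<in> U"
    and der: "\<And>s y. s \<in> closed_segment a b \<Longrightarrow> y \<in> U \<Longrightarrow> ((K s) has_derivative blinfun_apply (KD s y)) (at y)"
    and cont: "continuous_on (U \<times> closed_segment a b) (\<lambda>(y,s). KD s y)"
    and contK: "\<And>y. y \<in> U \<Longrightarrow> continuous_on (closed_segment a b) (\<lambda>s. K s y)"
  shows "((\<lambda>y. oint a b (\<lambda>s. K s y)) has_derivative (\<lambda>v. oint a b (\<lambda>s. KD s y0 v))) (at y0)"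
proof -
  obtain r where r: "r > 0" "ball y0 r \<subseteq> U" using U openE by blast
  have main: "((\<lambda>y. integral {c..d} (\<lambda>s. K s y)) has_derivative (\<lambda>v. integral {c..d} (\<lambda>s. KD s y0 v))) (at y0)"
    if cd: "closed_segment a b = {c..d}" for c d
  proof -
    have "((\<lambda>y. integral (cbox c d) (\<lambda>s. K s y)) has_derivative blinfun_apply (integral (cbox c d) (\<lambda>s. KD s y0))) (at y0 within ball y0 r)"
    proof (rule leibniz_rule[where f="\<lambda>y s. K s y" and fx="\<lambda>y s. KD s y"])
      show "((\<lambda>y. K t y) has_derivative blinfun_apply (KD t x)) (at x within ball y0 r)"
        if "x \<in> ball y0 r" "t \<in> cbox c d" for x t
      proof -
        have "x \<in> U" using that r by auto
        moreover have "t \<in> closed_segment a b" using that cd by auto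
        ultimately show ?thesis using der[of t x] by (auto intro: has_derivative_at_withinI)
      qed
      show "(\<lambda>s. K s x) integrable_on cbox c d" if "x \<in> ball y0 r" for x
      proof -
        have "x \<in> U" using that r by auto
        then have "continuous_on {c..d} (\<lambda>s. K s x)" using contK[of x] cd by simp
        then show ?thesis using integrable_continuous_real by simp
      qed
      show "continuous_on (ball y0 r \<times> cbox c d) (\<lambda>(x, t). KD t x)"
        by (rule continuous_on_subset[OF cont]) (use r cd in auto)
      show "y0 \<in> ball y0 r" using r by simp
      show "convex (ball y0 r)" by simp
    qed
    moreover have "at y0 within ball y0 r = at y0" by (rule at_within_open) (use r in auto)
    ultimately have d1: "((\<lambda>y. integral {c..d} (\<lambda>s. K s y)) has_derivative blinfun_apply (integral {c..d} (\<lambda>s. KD s y0))) (at y0)"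
      by simp
    have ci: "(\<lambda>s. KD s y0) integrable_on {c..d}"
    proof (rule integrable_continuous_real)
      have c1: "continuous_on {c..d} (\<lambda>s. (y0, s))" by (intro continuous_intros)
      have c2: "continuous_on ((\<lambda>s. (y0, s)) ` {c..d}) (\<lambda>(y,s). KD s y)"
        by (rule continuous_on_subset[OF cont]) (use U cd in auto)
      have "continuous_on {c..d} ((\<lambda>(y,s). KD s y) \<circ> (\<lambda>s. (y0, s)))"
        by (rule continuous_on_compose[OF c1 c2])
      then show "continuous_on {c..d} (\<lambda>s. KD s y0)" by (simp add: o_def)
    qed
    have "blinfun_apply (integral {c..d} (\<lambda>s. KD s y0)) = (\<lambda>v. integral {c..d} (\<lambda>s. KD s y0 v))"
      by (rule ext) (rule blinfun_apply_integral[OF ci])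
    then show ?thesis using d1 by simp
  qed
  show ?thesis
  proof (cases "a \<le> b")
    case True
    then show ?thesis using main[of a b] by (simp add: oint_def closed_segment_eq_real_ivl)
  next
    case False
    then have "((\<lambda>y. - integral {b..a} (\<lambda>s. K s y)) has_derivative (\<lambda>v. - integral {b..a} (\<lambda>s. KD s y0 v))) (at y0)"
      using main[of b a] by (intro has_derivative_minus) (simp add: closed_segment_eq_real_ivl)
    then show ?thesis using False by (simp add: oint_def)
  qed
qed



lemma smooth_iter:
  assumes "smooth_on S f" shows "smooth_on S (iter_dderiv vs f)"
  using assms unfolding smooth_on_def by (simp add: iter_append[symmetric])

lemma smooth_add:
  assumes "smooth_on S f" "smooth_on S g" "open S"
  shows "smooth_on S (\<lambda>x. f x + g x)"
proof -
  have eq: "x \<in> S \<Longrightarrow> iter_dderiv vs (\<lambda>x. f x + g x) x = iter_dderiv vs f x + iter_dderiv vs g x" for vs x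
  proof (induction vs arbitrary: x)
    case Nil then show ?case by simp
  next
    case (Cons v vs)
    have "frechet_derivative (iter_dderiv vs (\<lambda>x. f x + g x)) (at x)
          = frechet_derivative (\<lambda>x. iter_dderiv vs f x + iter_dderiv vs g x) (at x)"
      by (rule fd_cong[OF assms(3) Cons.prems]) (rule Cons.IH)
    also have "\<dots> = (\<lambda>h. frechet_derivative (iter_dderiv vs f) (at x) h + frechet_derivative (iter_dderiv vs g) (at x) h)"
    proof -
      have "((\<lambda>x. iter_dderiv vs f x + iter_dderiv vs g x) has_derivative (\<lambda>h. frechet_derivative (iter_dderiv vs f) (at x) h + frechet_derivative (iter_dderiv vs g) (at x) h)) (at x)"
        by (rule has_derivative_add[OF smooth_has_fd[OF smooth_iter[OF assms(1)] assms(3) Cons.prems] smooth_has_fd[OF smooth_iter[OF assms(2)] assms(3) Cons.prems]])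
      then show ?thesis by (rule frechet_derivative_at[symmetric])
    qed
    finally show ?case by simp
  qed
  show ?thesis unfolding smooth_on_def
  proof
    fix vs
    have d: "iter_dderiv vs f differentiable_on S" "iter_dderiv vs g differentiable_on S"
      using assms(1,2) unfolding smooth_on_def by blast+
    have "(\<lambda>x. iter_dderiv vs f x + iter_dderiv vs g x) differentiable_on S"
      by (rule differentiable_on_add[OF d])
    then show "iter_dderiv vs (\<lambda>x. f x + g x) differentiable_on S"
      by (rule diff_on_cong[OF assms(3), rotated]) (simp add: eq)
  qed
qed

lemma smooth_pair:
  assumes "smooth_on S f" "smooth_on S g" "open S"
  shows "smooth_on S (\<lambda>x. (f x, g x))"
proof -
  have l1: "bounded_linear (\<lambda>a::'b. (a, 0::'c))"
    by (rule bounded_linear_Pair[OF bounded_linear_ident bounded_linear_zero])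
  have l2: "bounded_linear (\<lambda>a::'c. (0::'b, a))"
    by (rule bounded_linear_Pair[OF bounded_linear_zero bounded_linear_ident])
  have "smooth_on S (\<lambda>x. (f x, 0) + (0, g x))"
    by (rule smooth_add[OF smooth_linear[OF assms(1,3) l1] smooth_linear[OF assms(2,3) l2] assms(3)])
  then show ?thesis by simp
qed

lemma smooth_scale:
  assumes "smooth_on S f" "open S"
  shows "smooth_on S (\<lambda>x. c *\<^sub>R f x)"
  by (rule smooth_linear[OF assms bounded_linear_scaleR_right])

lemma partial_y:
  assumes "k differentiable at (s, y)"
  shows "((\<lambda>y. k (s, y)) has_derivative (\<lambda>v. frechet_derivative k (at (s, y)) (0, v))) (at y)"
proof -
  have p: "((\<lambda>y. (s, y)) has_derivative (\<lambda>v. (0, v))) (at y)"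
    by (rule has_derivative_Pair[OF has_derivative_const has_derivative_ident])
  have "(k has_derivative frechet_derivative k (at (s, y))) (at (s, y))"
    using assms frechet_derivative_works by blast
  from diff_chain_at[OF p this] show ?thesis by (simp add: o_def)
qed

lemma partial_t:
  assumes "k differentiable at (t, y)"
  shows "((\<lambda>t. k (t, y)) has_derivative (\<lambda>v. frechet_derivative k (at (t, y)) (v, 0))) (at t)"
proof -
  have p: "((\<lambda>t. (t, y)) has_derivative (\<lambda>v. (v, 0))) (at t)"
    by (rule has_derivative_Pair[OF has_derivative_ident has_derivative_const])
  have "(k has_derivative frechet_derivative k (at (t, y))) (at (t, y))"
    using assms frechet_derivative_works by blast
  from diff_chain_at[OF p this] show ?thesis by (simp add: o_def)
qed

lemma fd_linear:
  assumes "k differentiable at x"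
  shows "linear (frechet_derivative k (at x))"
  using assms frechet_derivative_works has_derivative_linear by blast

lemma fd_bounded_linear:
  assumes "k differentiable at x"
  shows "bounded_linear (frechet_derivative k (at x))"
  using assms frechet_derivative_works has_derivative_bounded_linear by blast

lemma smooth_cont_at:
  assumes "smooth_on S f" "open S" "x \<in> S"
  shows "continuous (at x) f"
  using smooth_diff_at[OF assms] differentiable_imp_continuous_within by blast

lemma cont_slice_t:
  fixes k :: "real \<times> 'x::real_normed_vector \<Rightarrow> 'b::real_normed_vector"
  assumes "smooth_on (UNIV \<times> Q) k" "open Q" "y \<in> Q"
  shows "continuous_on UNIV (\<lambda>s. k (s, y))"
proof -
  have "continuous (at s) (\<lambda>s. k (s, y))" for s
  proof -
    have c1: "continuous (at s) (\<lambda>s. (s, y))" by (intro continuous_intros)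
    have c2: "continuous (at (s, y)) k"
      by (rule smooth_cont_at[OF assms(1)]) (use assms in \<open>auto intro: open_Times\<close>)
    show ?thesis using continuous_at_compose[OF c1, of k] c2 by (simp add: o_def)
  qed
  then show ?thesis by (simp add: continuous_on_eq_continuous_within continuous_at_imp_continuous_within)
qed



lemma cont_swap_comp:
  fixes g :: "real \<times> 'x::real_normed_vector \<Rightarrow> 'b::real_normed_vector"
  assumes "continuous_on (UNIV \<times> Q) g"
  shows "continuous_on (Q \<times> T) (\<lambda>(y, s). g (s, y))"
proof -
  have c1: "continuous_on (Q \<times> T) (\<lambda>z::'x \<times> real. (snd z, fst z))" by (intro continuous_intros)
  have c2: "continuous_on ((\<lambda>z::'x \<times> real. (snd z, fst z)) ` (Q \<times> T)) g"
    by (rule continuous_on_subset[OF assms]) auto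
  have "continuous_on (Q \<times> T) (g \<circ> (\<lambda>z. (snd z, fst z)))"
    by (rule continuous_on_compose[OF c1 c2])
  moreover have "(g \<circ> (\<lambda>z. (snd z, fst z))) = (\<lambda>(y, s). g (s, y))" by (auto simp: fun_eq_iff)
  ultimately show ?thesis by simp
qed

lemma leibQ:
  fixes k :: "real \<times> 'x::euclidean_space \<Rightarrow> 'b::euclidean_space"
  assumes sm: "smooth_on (UNIV \<times> Q) k" and oQ: "open Q" and y0: "y0 \<in> Q"
  shows "((\<lambda>y. oint a b (\<lambda>s. k (s, y))) has_derivative
          (\<lambda>v. oint a b (\<lambda>s. frechet_derivative k (at (s, y0)) (0, v)))) (at y0)"
proof -
  have oS: "open (UNIV \<times> Q)" using oQ by (simp add: open_Times)
  define KD where "KD s y = Blinfun (\<lambda>v. frechet_derivative k (at (s, y)) (0, v))" for s y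
  have pd: "((\<lambda>y. k (s, y)) has_derivative (\<lambda>v. frechet_derivative k (at (s, y)) (0, v))) (at y)"
    if "y \<in> Q" for s y
    by (rule partial_y[OF smooth_diff_at[OF sm oS]]) (use that in simp)
  have KDa: "blinfun_apply (KD s y) = (\<lambda>v. frechet_derivative k (at (s, y)) (0, v))" if "y \<in> Q" for s y
    unfolding KD_def using pd[OF that, of s]
    by (intro bounded_linear_Blinfun_apply has_derivative_bounded_linear) 
  have "((\<lambda>y. oint a b (\<lambda>s. k (s, y))) has_derivative (\<lambda>v. oint a b (\<lambda>s. KD s y0 v))) (at y0)"
  proof (rule oint_leibniz[where K="\<lambda>s y. k (s, y)" and KD=KD and U=Q])
    show "open Q" by (rule oQ)
    show "y0 \<in> Q" by (rule y0)
    show "((\<lambda>y. k (s, y)) has_derivative blinfun_apply (KD s y)) (at y)"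
      if "s \<in> closed_segment a b" "y \<in> Q" for s y
      using pd[OF that(2), of s] KDa[OF that(2), of s] by simp
    show "continuous_on (Q \<times> closed_segment a b) (\<lambda>(y, s). KD s y)"
    proof (rule continuous_on_blinfun_componentwise)
      fix i :: 'x assume "i \<in> Basis"
      have c: "continuous_on (UNIV \<times> Q) (\<lambda>p. frechet_derivative k (at p) (0, i))"
        by (rule smooth_cont[OF smooth_dderiv[OF sm] oS])
      have "continuous_on (Q \<times> closed_segment a b) (\<lambda>(y, s). frechet_derivative k (at (s, y)) (0, i))"
        by (rule cont_swap_comp[OF c])
      then show "continuous_on (Q \<times> closed_segment a b) (\<lambda>x. blinfun_apply (case x of (y, s) \<Rightarrow> KD s y) i)"
        by (rule continuous_on_eq) (auto simp: KDa)
    qed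
    show "continuous_on (closed_segment a b) (\<lambda>s. k (s, y))" if "y \<in> Q" for y
      by (rule continuous_on_subset[OF cont_slice_t[OF sm oQ that]]) simp
  qed
  moreover have "(\<lambda>v. oint a b (\<lambda>s. KD s y0 v)) = (\<lambda>v. oint a b (\<lambda>s. frechet_derivative k (at (s, y0)) (0, v)))"
    using KDa[OF y0] by simp
  ultimately show ?thesis by simp
qed

lemma ftcQ:
  fixes k :: "real \<times> 'x::euclidean_space \<Rightarrow> 'b::euclidean_space"
  assumes sm: "smooth_on (UNIV \<times> Q) k" and oQ: "open Q" and y: "y \<in> Q"
  shows "((\<lambda>t. oint a t (\<lambda>s. k (s, y))) has_vector_derivative k (t, y)) (at t)"
  by (rule oint_has_vd_UNIV[OF cont_slice_t[OF sm oQ y]])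



definition I1 :: "(real \<times> 'x \<Rightarrow> 'b::euclidean_space) \<Rightarrow> real \<times> 'x \<Rightarrow> 'b" where
  "I1 k p = oint 0 (fst p) (\<lambda>s. k (s, snd p))"

definition I2 :: "(real \<times> 'x \<Rightarrow> 'b::euclidean_space) \<Rightarrow> real \<times> 'x \<Rightarrow> 'b" where
  "I2 k p = oint 0 1 (\<lambda>s. k (s, snd p))"

lemma I1_deriv:
  fixes k :: "real \<times> 'x::euclidean_space \<Rightarrow> 'b::euclidean_space"
  assumes sm: "smooth_on (UNIV \<times> Q) k" and oQ: "open Q" and p0: "p0 \<in> UNIV \<times> Q"
  shows "(I1 k has_derivative (\<lambda>w. fst w *\<^sub>R k p0 + I1 (\<lambda>q. frechet_derivative k (at q) (0, snd w)) p0)) (at p0)"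
proof -
  obtain t0 y0 where p0e: "p0 = (t0, y0)" by (cases p0)
  have y0: "y0 \<in> Q" using p0 p0e by simp
  have oS: "open (UNIV \<times> Q)" using oQ by (simp add: open_Times)
  define f where "f y t = oint 0 t (\<lambda>s. k (s, y))" for y t
  define fx where "fx v = oint 0 t0 (\<lambda>s. frechet_derivative k (at (s, y0)) (0, v))" for v
  have H: "((\<lambda>(y, t). f y t) has_derivative (\<lambda>(vy, tau). fx vy + blinfun_apply (blinfun_scaleR_left (k (t0, y0))) tau)) (at (y0, t0) within Q \<times> UNIV)"
  proof (rule has_derivative_partialsI[where fy="\<lambda>y t. blinfun_scaleR_left (k (t, y))"])
    show "((\<lambda>y. f y t0) has_derivative fx) (at y0 within Q)"
      unfolding f_def fx_def by (rule has_derivative_at_withinI[OF leibQ[OF sm oQ y0]])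
    show "((\<lambda>t. f y t) has_derivative blinfun_apply (blinfun_scaleR_left (k (t, y)))) (at t within UNIV)"
      if "y \<in> Q" "t \<in> UNIV" for y t
      using ftcQ[OF sm oQ that(1), of 0 t] unfolding f_def has_vector_derivative_def by simp
    have c1: "continuous (at (y0, t0)) (\<lambda>z. k (snd z, fst z))"
    proof -
      have a: "continuous (at (y0, t0)) (\<lambda>z::'x \<times> real. (snd z, fst z))" by (intro continuous_intros)
      have b: "continuous (at (snd (y0, t0), fst (y0, t0))) k"
        by (rule smooth_cont_at[OF sm oS]) (use y0 in simp)
      show ?thesis using continuous_at_compose[OF a b] by (simp add: o_def)
    qed
    have "continuous (at (y0, t0)) (\<lambda>z. blinfun_scaleR_left (k (snd z, fst z)))"
      by (rule bounded_linear.continuous[OF bounded_linear_blinfun_scaleR_left c1])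
    moreover have "(\<lambda>(y, t). blinfun_scaleR_left (k (t, y))) = (\<lambda>z. blinfun_scaleR_left (k (snd z, fst z)))"
      by (auto simp: fun_eq_iff)
    ultimately show "continuous (at (y0, t0) within Q \<times> UNIV) (\<lambda>(y, t). blinfun_scaleR_left (k (t, y)))"
      by (simp add: continuous_at_imp_continuous_within)
  qed auto
  have "at (y0, t0) within Q \<times> UNIV = at (y0, t0)"
    by (rule at_within_open) (use y0 oQ in \<open>auto simp: open_Times\<close>)
  with H have H2: "((\<lambda>(y, t). f y t) has_derivative (\<lambda>(vy, tau). fx vy + blinfun_apply (blinfun_scaleR_left (k (t0, y0))) tau)) (at (y0, t0))"
    by simp
  have sw: "((\<lambda>p::real \<times> 'x. (snd p, fst p)) has_derivative (\<lambda>w. (snd w, fst w))) (at p0)"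
    by (rule has_derivative_Pair[OF has_derivative_snd[OF has_derivative_ident] has_derivative_fst[OF has_derivative_ident]])
  have H3: "((\<lambda>p::real \<times> 'x. (snd p, fst p)) p0) = (y0, t0)" using p0e by simp
  have "(((\<lambda>(y, t). f y t) \<circ> (\<lambda>p. (snd p, fst p))) has_derivative
        ((\<lambda>(vy, tau). fx vy + blinfun_apply (blinfun_scaleR_left (k (t0, y0))) tau) \<circ> (\<lambda>w. (snd w, fst w)))) (at p0)"
    by (rule diff_chain_at[OF sw]) (simp only: H3 H2)
  moreover have "((\<lambda>(y, t). f y t) \<circ> (\<lambda>p. (snd p, fst p))) = I1 k"
    by (auto simp: fun_eq_iff f_def I1_def)
  moreover have "((\<lambda>(vy, tau). fx vy + blinfun_apply (blinfun_scaleR_left (k (t0, y0))) tau) \<circ> (\<lambda>w. (snd w, fst w)))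
     = (\<lambda>w. fst w *\<^sub>R k p0 + I1 (\<lambda>q. frechet_derivative k (at q) (0, snd w)) p0)"
    by (auto simp: fun_eq_iff fx_def I1_def p0e)
  ultimately show ?thesis by simp
qed

lemma I2_deriv:
  fixes k :: "real \<times> 'x::euclidean_space \<Rightarrow> 'b::euclidean_space"
  assumes sm: "smooth_on (UNIV \<times> Q) k" and oQ: "open Q" and p0: "p0 \<in> UNIV \<times> Q"
  shows "(I2 k has_derivative (\<lambda>w. I2 (\<lambda>q. frechet_derivative k (at q) (0, snd w)) p0)) (at p0)"
proof -
  have y0: "snd p0 \<in> Q" using p0 by auto
  have s: "(snd has_derivative snd) (at p0)" by (rule has_derivative_snd[OF has_derivative_ident, unfolded id_def[symmetric]])
  have "(((\<lambda>y. oint 0 1 (\<lambda>s. k (s, y))) \<circ> snd) has_derivative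
      ((\<lambda>v. oint 0 1 (\<lambda>s. frechet_derivative k (at (s, snd p0)) (0, v))) \<circ> snd)) (at p0)"
    by (rule diff_chain_at[OF s leibQ[OF sm oQ y0]])
  moreover have "I2 k = (\<lambda>p. oint 0 1 (\<lambda>s. k (s, snd p)))" by (rule ext) (simp add: I2_def)
  ultimately show ?thesis by (simp add: I2_def o_def)
qed



lemma CL_step:
  fixes k1 k2 h :: "real \<times> 'x::euclidean_space \<Rightarrow> 'b::euclidean_space"
  assumes oQ: "open Q" and sh: "smooth_on (UNIV \<times> Q) h"
    and s1: "smooth_on (UNIV \<times> Q) k1" and s2: "smooth_on (UNIV \<times> Q) k2"
    and FF: "\<forall>p\<in>UNIV \<times> Q. F p = h p + I1 k1 p + I2 k2 p"
  shows "F differentiable_on (UNIV \<times> Q)"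
    and "\<exists>h' k1' k2'. smooth_on (UNIV \<times> Q) h' \<and> smooth_on (UNIV \<times> Q) k1' \<and> smooth_on (UNIV \<times> Q) k2' \<and>
          (\<forall>p\<in>UNIV \<times> Q. iter_dderiv [w] F p = h' p + I1 k1' p + I2 k2' p)"
proof -
  have oS: "open (UNIV \<times> Q)" using oQ by (simp add: open_Times)
  have der: "(F has_derivative (\<lambda>w. frechet_derivative h (at p) w + fst w *\<^sub>R k1 p
              + I1 (\<lambda>q. frechet_derivative k1 (at q) (0, snd w)) p
              + I2 (\<lambda>q. frechet_derivative k2 (at q) (0, snd w)) p)) (at p)"
    if p: "p \<in> UNIV \<times> Q" for p
  proof -
    have a: "((\<lambda>p. h p + I1 k1 p + I2 k2 p) has_derivative (\<lambda>w. frechet_derivative h (at p) w + (fst w *\<^sub>R k1 p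
              + I1 (\<lambda>q. frechet_derivative k1 (at q) (0, snd w)) p)
              + I2 (\<lambda>q. frechet_derivative k2 (at q) (0, snd w)) p)) (at p)"
      by (intro has_derivative_add smooth_has_fd[OF sh oS p] I1_deriv[OF s1 oQ p] I2_deriv[OF s2 oQ p])
    have b: "((\<lambda>p. h p + I1 k1 p + I2 k2 p) has_derivative (\<lambda>w. frechet_derivative h (at p) w + fst w *\<^sub>R k1 p
              + I1 (\<lambda>q. frechet_derivative k1 (at q) (0, snd w)) p
              + I2 (\<lambda>q. frechet_derivative k2 (at q) (0, snd w)) p)) (at p)"
      using a by (simp add: add.assoc)
    show ?thesis
      by (rule has_derivative_transform_within_open[OF b oS p]) (use FF in \<open>metis\<close>)
  qed
  show "F differentiable_on (UNIV \<times> Q)"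
    unfolding differentiable_on_eq_differentiable_at[OF oS] differentiable_def using der by blast
  show "\<exists>h' k1' k2'. smooth_on (UNIV \<times> Q) h' \<and> smooth_on (UNIV \<times> Q) k1' \<and> smooth_on (UNIV \<times> Q) k2' \<and>
          (\<forall>p\<in>UNIV \<times> Q. iter_dderiv [w] F p = h' p + I1 k1' p + I2 k2' p)"
  proof (intro exI conjI)
    show "smooth_on (UNIV \<times> Q) (\<lambda>p. frechet_derivative h (at p) w + fst w *\<^sub>R k1 p)"
      by (rule smooth_add[OF smooth_dderiv[OF sh] smooth_scale[OF s1 oS] oS])
    show "smooth_on (UNIV \<times> Q) (\<lambda>q. frechet_derivative k1 (at q) (0, snd w))"
      by (rule smooth_dderiv[OF s1])
    show "smooth_on (UNIV \<times> Q) (\<lambda>q. frechet_derivative k2 (at q) (0, snd w))"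
      by (rule smooth_dderiv[OF s2])
    show "\<forall>p\<in>(UNIV::real set) \<times> Q. iter_dderiv [w] F p = (\<lambda>p. frechet_derivative h (at p) w + fst w *\<^sub>R k1 p) p
        + I1 (\<lambda>q. frechet_derivative k1 (at q) (0, snd w)) p + I2 (\<lambda>q. frechet_derivative k2 (at q) (0, snd w)) p"
    proof
      fix p assume p: "p \<in> (UNIV::real set) \<times> Q"
      show "iter_dderiv [w] F p = (\<lambda>p. frechet_derivative h (at p) w + fst w *\<^sub>R k1 p) p
        + I1 (\<lambda>q. frechet_derivative k1 (at q) (0, snd w)) p + I2 (\<lambda>q. frechet_derivative k2 (at q) (0, snd w)) p"
      proof -
        note e = frechet_derivative_at[OF der[OF p]]
        have "iter_dderiv [w] F p = frechet_derivative F (at p) w" by simp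
        also have "\<dots> = frechet_derivative h (at p) w + fst w *\<^sub>R k1 p
              + I1 (\<lambda>q. frechet_derivative k1 (at q) (0, snd w)) p
              + I2 (\<lambda>q. frechet_derivative k2 (at q) (0, snd w)) p"
          by (subst e[symmetric]) (rule refl)
        finally show ?thesis by simp
      qed
    qed
  qed
qed

lemma smooth_I:
  fixes k1 k2 h :: "real \<times> 'x::euclidean_space \<Rightarrow> 'b::euclidean_space"
  assumes oQ: "open Q" and sh: "smooth_on (UNIV \<times> Q) h"
    and s1: "smooth_on (UNIV \<times> Q) k1" and s2: "smooth_on (UNIV \<times> Q) k2"
    and FF: "\<forall>p\<in>UNIV \<times> Q. F p = h p + I1 k1 p + I2 k2 p"
  shows "smooth_on (UNIV \<times> Q) F"
proof -
  have cl: "\<exists>h k1 k2. smooth_on (UNIV \<times> Q) h \<and> smooth_on (UNIV \<times> Q) k1 \<and> smooth_on (UNIV \<times> Q) (k2 :: real \<times> 'x \<Rightarrow> 'b) \<and>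
          (\<forall>p\<in>UNIV \<times> Q. iter_dderiv vs F p = h p + I1 k1 p + I2 k2 p)" for vs
  proof (induction vs)
    case Nil then show ?case using sh s1 s2 FF by auto
  next
    case (Cons w vs)
    then obtain h k1 k2 where H: "smooth_on (UNIV \<times> Q) h" "smooth_on (UNIV \<times> Q) k1" "smooth_on (UNIV \<times> Q) (k2 :: real \<times> 'x \<Rightarrow> 'b)"
      "\<forall>p\<in>UNIV \<times> Q. iter_dderiv vs F p = h p + I1 k1 p + I2 k2 p" by blast
    have "iter_dderiv (w # vs) F = iter_dderiv [w] (iter_dderiv vs F)" by simp
    then show ?case using CL_step(2)[OF oQ H, of w] by simp
  qed
  show ?thesis unfolding smooth_on_def
  proof
    fix vs
    obtain h k1 k2 where H: "smooth_on (UNIV \<times> Q) h" "smooth_on (UNIV \<times> Q) k1" "smooth_on (UNIV \<times> Q) (k2 :: real \<times> 'x \<Rightarrow> 'b)"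
      "\<forall>p\<in>UNIV \<times> Q. iter_dderiv vs F p = h p + I1 k1 p + I2 k2 p" using cl[of vs] by blast
    show "iter_dderiv vs F differentiable_on UNIV \<times> Q" by (rule CL_step(1)[OF oQ H])
  qed
qed



lemma chain_vd:
  assumes g: "(g has_vector_derivative v) (at a)" and F: "F differentiable at (g a)"
  shows "((\<lambda>a. F (g a)) has_vector_derivative frechet_derivative F (at (g a)) v) (at a)"
proof -
  have g': "(g has_derivative (\<lambda>h. h *\<^sub>R v)) (at a)" using g by (simp add: has_vector_derivative_def)
  have F': "(F has_derivative frechet_derivative F (at (g a))) (at (g a))"
    using F frechet_derivative_works by blast
  have c: "((F \<circ> g) has_derivative (frechet_derivative F (at (g a)) \<circ> (\<lambda>h. h *\<^sub>R v))) (at a)"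
    by (rule diff_chain_at[OF g' F'])
  have "(frechet_derivative F (at (g a)) \<circ> (\<lambda>h. h *\<^sub>R v)) = (\<lambda>h. h *\<^sub>R frechet_derivative F (at (g a)) v)"
    by (rule ext) (simp add: linear_cmul[OF fd_linear[OF F]])
  with c show ?thesis by (simp add: has_vector_derivative_def o_def)
qed

lemma schwarz:
  fixes F :: "'a::real_normed_vector \<Rightarrow> 'b::euclidean_space"
  assumes sm: "smooth_on S F" and oS: "open S" and pS: "p \<in> S"
  shows "iter_dderiv [u, w] F p = iter_dderiv [w, u] F p"
proof -
  define F1 where "F1 = (\<lambda>x. frechet_derivative F (at x) u)"
  define F2 where "F2 = (\<lambda>x. frechet_derivative F (at x) w)"
  define F12 where "F12 = (\<lambda>x. frechet_derivative F1 (at x) w)"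
  define F21 where "F21 = (\<lambda>x. frechet_derivative F2 (at x) u)"
  have e1: "iter_dderiv [u, w] F p = F21 p" by (simp add: F21_def F2_def)
  have e2: "iter_dderiv [w, u] F p = F12 p" by (simp add: F12_def F1_def)
  have sF1: "smooth_on S F1" unfolding F1_def by (rule smooth_dderiv[OF sm])
  have sF2: "smooth_on S F2" unfolding F2_def by (rule smooth_dderiv[OF sm])
  have sF12: "smooth_on S F12" unfolding F12_def by (rule smooth_dderiv[OF sF1])
  obtain r where r: "r > 0" "ball p r \<subseteq> S" using oS pS openE by blast
  define d where "d = r / (2 * (norm u + norm w + 1))"
  have pos: "0 < norm u + norm w + 1" using norm_ge_zero[of u] norm_ge_zero[of w] by linarith
  have d0: "d > 0" unfolding d_def using r pos by (intro divide_pos_pos) auto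
  define T where "T = {-d<..<d}"
  define P where "P a b = p + a *\<^sub>R u + b *\<^sub>R w" for a b
  have P00: "P 0 0 = p" by (simp add: P_def)
  have PS: "P a b \<in> S" if "a \<in> T" "b \<in> T" for a b
  proof -
    have ab: "\<bar>a\<bar> < d" "\<bar>b\<bar> < d" using that by (auto simp: T_def)
    have "norm (a *\<^sub>R u + b *\<^sub>R w) \<le> \<bar>a\<bar> * norm u + \<bar>b\<bar> * norm w"
      by (rule order_trans[OF norm_triangle_ineq]) simp
    also have "\<dots> \<le> d * norm u + d * norm w"
      using ab by (intro add_mono mult_right_mono) auto
    also have "\<dots> = r * (norm u + norm w) / (2 * (norm u + norm w + 1))"
      using pos by (simp add: d_def add_divide_distrib[symmetric] distrib_left)
    also have "\<dots> < r"
    proof -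
      have "norm u + norm w < 2 * (norm u + norm w + 1)" using pos by (smt (verit))
      then have "r * (norm u + norm w) < r * (2 * (norm u + norm w + 1))" using r by simp
      moreover have "0 < 2 * (norm u + norm w + 1)" using pos by simp
      ultimately show ?thesis by (simp add: pos_divide_less_eq mult.commute)
    qed
    finally have "norm (P a b - p) < r" by (simp add: P_def)
    then have "dist p (P a b) < r" by (simp add: dist_norm norm_minus_commute)
    then show ?thesis using r by auto
  qed
  have dG: "G differentiable at (P a b)" if "smooth_on S G" "a \<in> T" "b \<in> T" for G :: "'a \<Rightarrow> 'b" and a b
    by (rule smooth_diff_at[OF that(1) oS PS[OF that(2,3)]])
  have cG: "continuous_on X (\<lambda>s. G (P s b))" if "smooth_on S G" "X \<subseteq> T" "b \<in> T" for G :: "'a \<Rightarrow> 'b" and X b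
  proof -
    have c1: "continuous_on X (\<lambda>s. P s b)" unfolding P_def by (intro continuous_intros)
    have c2: "continuous_on ((\<lambda>s. P s b) ` X) G"
      by (rule continuous_on_subset[OF smooth_cont[OF that(1) oS]]) (use that PS in auto)
    show ?thesis using continuous_on_compose[OF c1 c2] by (simp add: o_def)
  qed
  have Pa: "((\<lambda>a. P a b) has_vector_derivative u) (at a)" for a b
    unfolding P_def by (auto intro!: derivative_eq_intros)
  have Pb: "((\<lambda>b. P a b) has_vector_derivative w) (at b)" for a b
    unfolding P_def by (auto intro!: derivative_eq_intros)
  have T0: "0 \<in> T" using d0 by (simp add: T_def)
  have oT: "open T" by (simp add: T_def)
  have cT: "convex T" by (simp add: T_def)
  have ftcT: "((\<lambda>a. oint 0 a (\<lambda>s. G (P s b))) has_vector_derivative G (P a b)) (at a)"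
    if "smooth_on S G" "a \<in> T" "b \<in> T" for G :: "'a \<Rightarrow> 'b" and a b
  proof -
    define c where "c = (\<bar>a\<bar> + d) / 2"
    have ca: "-c < a" "a < c" "c < d" using that(2) unfolding T_def c_def by (auto simp: abs_if field_simps)
    have sub: "{-c..c} \<subseteq> T" using ca by (auto simp: T_def)
    show ?thesis
      by (rule oint_has_vd[OF cG[OF that(1) sub that(3)]]) (use ca in auto)
  qed
  have step1: "F (P a b) - F (P 0 b) = oint 0 a (\<lambda>s. F1 (P s b))" if "a \<in> T" "b \<in> T" for a b
  proof -
    define H where "H a = F (P a b) - F (P 0 b) - oint 0 a (\<lambda>s. F1 (P s b))" for a
    have "(H has_derivative (\<lambda>h. 0)) (at x within T)" if "x \<in> T" for x
    proof -
      have "((\<lambda>a. F (P a b)) has_vector_derivative F1 (P x b)) (at x)"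
        using chain_vd[OF Pa dG[OF sm that \<open>b \<in> T\<close>]] by (simp add: F1_def)
      then have "(H has_vector_derivative F1 (P x b) - 0 - F1 (P x b)) (at x)"
        unfolding H_def
        by (intro has_vector_derivative_diff has_vector_derivative_const ftcT[OF sF1 that \<open>b \<in> T\<close>])
      then have "(H has_derivative (\<lambda>h. 0)) (at x)" by (simp add: has_vector_derivative_def)
      then show ?thesis by (rule has_derivative_at_withinI)
    qed
    then have "H a = H 0" using has_derivative_zero_unique[OF cT _ that(1) T0] by blast
    then show ?thesis by (simp add: H_def)
  qed
  have step2: "F2 (P a 0) - F2 p = oint 0 a (\<lambda>s. F12 (P s 0))" if aT: "a \<in> T" for a
  proof -
    define KD where "KD s b = blinfun_scaleR_left (F12 (P s b))" for s b
    have segT: "closed_segment 0 a \<subseteq> T"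
      using aT T0 cT by (simp add: closed_segment_subset)
    have R: "((\<lambda>b. oint 0 a (\<lambda>s. F1 (P s b))) has_derivative (\<lambda>v. oint 0 a (\<lambda>s. KD s 0 v))) (at 0)"
    proof (rule oint_leibniz[where K="\<lambda>s b. F1 (P s b)" and U=T])
      show "open T" by (rule oT)
      show "0 \<in> T" by (rule T0)
      show "((\<lambda>b. F1 (P s b)) has_derivative blinfun_apply (KD s b)) (at b)"
        if "s \<in> closed_segment 0 a" "b \<in> T" for s b
      proof -
        have sT: "s \<in> T" using that segT by auto
        have "((\<lambda>b. F1 (P s b)) has_vector_derivative F12 (P s b)) (at b)"
          using chain_vd[OF Pb dG[OF sF1 sT that(2)]] by (simp add: F12_def)
        then show ?thesis by (simp add: KD_def has_vector_derivative_def)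
      qed
      show "continuous_on (T \<times> closed_segment 0 a) (\<lambda>(b, s). KD s b)"
      proof -
        have c1: "continuous_on (T \<times> closed_segment 0 a) (\<lambda>z. P (snd z) (fst z))"
          unfolding P_def by (intro continuous_intros)
        have c2: "continuous_on ((\<lambda>z. P (snd z) (fst z)) ` (T \<times> closed_segment 0 a)) F12"
          by (rule continuous_on_subset[OF smooth_cont[OF sF12 oS]]) (use segT PS in auto)
        have "continuous_on (T \<times> closed_segment 0 a) (\<lambda>z. F12 (P (snd z) (fst z)))"
          using continuous_on_compose[OF c1 c2] by (simp add: o_def)
        then have "continuous_on (T \<times> closed_segment 0 a) (\<lambda>z. blinfun_scaleR_left (F12 (P (snd z) (fst z))))"
          by (rule bounded_linear.continuous_on[OF bounded_linear_blinfun_scaleR_left])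
        moreover have "(\<lambda>(b, s). KD s b) = (\<lambda>z. blinfun_scaleR_left (F12 (P (snd z) (fst z))))"
          by (auto simp: fun_eq_iff KD_def)
        ultimately show ?thesis by simp
      qed
      show "continuous_on (closed_segment 0 a) (\<lambda>s. F1 (P s b))" if "b \<in> T" for b
        by (rule cG[OF sF1 segT that])
    qed
    have L: "((\<lambda>b. F (P a b) - F (P 0 b)) has_derivative (\<lambda>v. v *\<^sub>R F2 (P a 0) - v *\<^sub>R F2 (P 0 0))) (at 0)"
    proof -
      have "((\<lambda>b. F (P a b)) has_vector_derivative F2 (P a 0)) (at 0)"
        using chain_vd[OF Pb dG[OF sm aT T0]] by (simp add: F2_def)
      moreover have "((\<lambda>b. F (P 0 b)) has_vector_derivative F2 (P 0 0)) (at 0)"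
        using chain_vd[OF Pb dG[OF sm T0 T0]] by (simp add: F2_def)
      ultimately show ?thesis
        unfolding has_vector_derivative_def by (rule has_derivative_diff)
    qed
    have R2: "((\<lambda>b. F (P a b) - F (P 0 b)) has_derivative (\<lambda>v. oint 0 a (\<lambda>s. KD s 0 v))) (at 0)"
      by (rule has_derivative_transform_within_open[OF R oT T0]) (use step1[OF aT] in simp)
    have "(\<lambda>v. v *\<^sub>R F2 (P a 0) - v *\<^sub>R F2 (P 0 0)) = (\<lambda>v. oint 0 a (\<lambda>s. KD s 0 v))"
      by (rule has_derivative_unique[OF L R2])
    then have "1 *\<^sub>R F2 (P a 0) - 1 *\<^sub>R F2 (P 0 0) = oint 0 a (\<lambda>s. KD s 0 1)"
      by (rule fun_cong)
    then show ?thesis by (simp add: KD_def P00)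
  qed
  have M: "((\<lambda>a. F2 (P a 0) - F2 p) has_vector_derivative F21 p) (at 0)"
  proof -
    have "((\<lambda>a. F2 (P a 0)) has_vector_derivative F21 (P 0 0)) (at 0)"
      using chain_vd[OF Pa dG[OF sF2 T0 T0]] by (simp add: F21_def)
    then have "((\<lambda>a. F2 (P a 0) - F2 p) has_vector_derivative F21 (P 0 0) - 0) (at 0)"
      by (intro has_vector_derivative_diff has_vector_derivative_const)
    then show ?thesis by (simp add: P00)
  qed
  have N: "((\<lambda>a. oint 0 a (\<lambda>s. F12 (P s 0))) has_vector_derivative F12 p) (at 0)"
    using ftcT[OF sF12 T0 T0] by (simp add: P00)
  have M2: "((\<lambda>a. oint 0 a (\<lambda>s. F12 (P s 0))) has_vector_derivative F21 p) (at 0)"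
    by (rule has_vector_derivative_transform_within_open[OF M oT T0]) (rule step2)
  have "F21 p = F12 p" by (rule vector_derivative_unique_at[OF M2 N])
  then show ?thesis using e1 e2 by simp
qed



lemma smooth_zero: "smooth_on S (\<lambda>_. 0)"
proof -
  have "iter_dderiv vs (\<lambda>_. 0 :: 'b::real_normed_vector) = (\<lambda>(_::'a::real_normed_vector). 0)" for vs
    by (induction vs) auto
  then show ?thesis unfolding smooth_on_def by (simp add: differentiable_on_const)
qed

lemma smooth_I1:
  fixes k :: "real \<times> 'x::euclidean_space \<Rightarrow> 'b::euclidean_space"
  assumes "open Q" "smooth_on (UNIV \<times> Q) k"
  shows "smooth_on (UNIV \<times> Q) (I1 k)"
  by (rule smooth_I[OF assms(1) smooth_zero assms(2) smooth_zero]) (simp add: I2_def oint_def)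

lemma smooth_I2:
  fixes k :: "real \<times> 'x::euclidean_space \<Rightarrow> 'b::euclidean_space"
  assumes "open Q" "smooth_on (UNIV \<times> Q) k"
  shows "smooth_on (UNIV \<times> Q) (I2 k)"
  by (rule smooth_I[OF assms(1) smooth_zero smooth_zero assms(2)]) (simp add: I1_def oint_def)

lemma oint_shift_periodic:
  fixes g :: "real \<Rightarrow> 'b::euclidean_space"
  assumes c: "continuous_on UNIV g" and per: "\<And>s. g (s + 1) = g s"
  shows "oint 0 (t + 1) g - oint 0 t g = oint 0 1 g"
proof -
  define H where "H t = oint 0 (t + 1) g - oint 0 t g" for t
  have "(H has_derivative (\<lambda>h. 0)) (at x within UNIV)" for x
  proof -
    have a: "((\<lambda>t. t + 1) has_vector_derivative 1) (at x)" by (auto intro!: derivative_eq_intros)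
    have "(((\<lambda>u. oint 0 u g) \<circ> (\<lambda>t. t + 1)) has_vector_derivative (1 *\<^sub>R g (x + 1))) (at x)"
      by (rule vector_diff_chain_at[OF a oint_has_vd_UNIV[OF c]])
    then have "((\<lambda>t. oint 0 (t + 1) g) has_vector_derivative g x) (at x)" by (simp add: o_def per)
    then have "(H has_vector_derivative g x - g x) (at x)"
      unfolding H_def by (intro has_vector_derivative_diff oint_has_vd_UNIV[OF c])
    then show ?thesis by (simp add: has_vector_derivative_def)
  qed
  then have "H t = H 0" using has_derivative_zero_unique[of UNIV H t 0] by auto
  then show ?thesis by (simp add: H_def)
qed

lemma fd_pair:
  assumes "f differentiable at x" "g differentiable at x"
  shows "frechet_derivative (\<lambda>y. (f y, g y)) (at x) = (\<lambda>v. (frechet_derivative f (at x) v, frechet_derivative g (at x) v))"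
proof -
  have "((\<lambda>y. (f y, g y)) has_derivative (\<lambda>v. (frechet_derivative f (at x) v, frechet_derivative g (at x) v))) (at x)"
    using assms by (intro has_derivative_Pair) (auto simp: frechet_derivative_works[symmetric])
  then show ?thesis by (rule frechet_derivative_at[symmetric])
qed



theorem lemma3p7:
  fixes Q :: "(real \<times> real) set"
    and \<phi> :: "real \<Rightarrow> real \<times> real \<Rightarrow> real"
    and A :: "real \<Rightarrow> real \<times> real \<Rightarrow> real \<times> real"
  assumes Q_open: "open Q"
    and phi_smooth: "smooth_on (UNIV \<times> Q) (\<lambda>p. \<phi> (fst p) (snd p))"
    and phi_periodic: "\<forall>t. \<forall>x\<in>Q. \<phi> (t + 1) x = \<phi> t x"
    and A_tp: "twisted_periodic_vp Q A"
  shows "twisted_periodic_vp Q (Aphi A \<phi>) \<and>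
         (\<forall>(I :: real set) (q :: real \<Rightarrow> real \<times> real).
            open I \<longrightarrow> smooth_on I q \<longrightarrow> q ` I \<subseteq> Q \<longrightarrow>
            ((\<forall>t\<in>I. solves_eq A \<phi> q t) \<longleftrightarrow> (\<forall>t\<in>I. solves_eq (Aphi A \<phi>) (\<lambda>_ _. 0) q t)))"
proof -
  define S where "S = (UNIV :: real set) \<times> Q"
  have oS: "open S" using Q_open by (simp add: S_def open_Times)
  define Phi where "Phi p = \<phi> (fst p) (snd p)" for p :: "real \<times> (real \<times> real)"
  define Ap where "Ap p = A (fst p) (snd p)" for p :: "real \<times> (real \<times> real)"
  have sPhi: "smooth_on S Phi" using phi_smooth by (simp add: S_def Phi_def[abs_def])
  have sA: "smooth_on S Ap" and tdA: "\<forall>t. \<forall>x\<in>Q. tdot A (t + 1) x = tdot A t x"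
    and rotA: "\<forall>t. \<forall>x\<in>Q. rot (A (t + 1)) x = rot (A t) x"
    using A_tp by (simp_all add: twisted_periodic_vp_def S_def Ap_def[abs_def])
  obtain f :: "real \<Rightarrow> real \<times> real \<Rightarrow> real" where
    sf0: "smooth_on (UNIV \<times> Q) (\<lambda>p. f (fst p) (snd p))" and fA: "\<forall>t. \<forall>x\<in>Q. A (t + 1) x - A t x = grad (f t) x"
    using A_tp unfolding twisted_periodic_vp_def by blast
  define fj where "fj p = f (fst p) (snd p)" for p :: "real \<times> (real \<times> real)"
  have sf: "smooth_on S fj" using sf0 by (simp add: S_def fj_def[abs_def])
  define k1 where "k1 p = frechet_derivative Phi (at p) (0, (1, 0))" for p
  define k2 where "k2 p = frechet_derivative Phi (at p) (0, (0, 1))" for p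
  define kk where "kk p = (k1 p, k2 p)" for p
  have sk1: "smooth_on S k1" unfolding k1_def[abs_def] by (rule smooth_dderiv[OF sPhi])
  have sk2: "smooth_on S k2" unfolding k2_def[abs_def] by (rule smooth_dderiv[OF sPhi])
  have skk: "smooth_on S kk" unfolding kk_def[abs_def] by (rule smooth_pair[OF sk1 sk2 oS])
  have inS: "(s, x) \<in> S" if "x \<in> Q" for s x using that by (simp add: S_def)
  have pfd: "frechet_derivative (\<lambda>y. G (s, y)) (at x) = (\<lambda>v. frechet_derivative G (at (s, x)) (0, v))"
    if "smooth_on S G" "x \<in> Q" for G :: "real \<times> (real \<times> real) \<Rightarrow> 'c::real_normed_vector" and s x
    by (rule frechet_derivative_at[symmetric], rule partial_y, rule smooth_diff_at[OF that(1) oS inS[OF that(2)]])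
  have G1: "grad (\<phi> s) x = kk (s, x)" if "x \<in> Q" for s x
  proof -
    have "\<phi> s = (\<lambda>y. Phi (s, y))" by (simp add: Phi_def)
    then show ?thesis using pfd[OF sPhi that, of s] by (simp add: grad_def kk_def k1_def k2_def)
  qed
  have Aphi_eq: "Aphi A \<phi> t x = Ap (t, x) + I1 kk (t, x)" if "x \<in> Q" for t x
  proof -
    have "(\<lambda>s. grad (\<phi> s) x) = (\<lambda>s. kk (s, x))" using G1[OF that] by simp
    then show ?thesis by (simp add: Aphi_def I1_def Ap_def)
  qed
  have sI1: "smooth_on S (I1 kk)" using smooth_I1[OF Q_open] skk by (simp add: S_def)
  have C1: "smooth_on (UNIV \<times> Q) (\<lambda>p. Aphi A \<phi> (fst p) (snd p))"
  proof -
    have "smooth_on S (\<lambda>p. Ap p + I1 kk p)" by (rule smooth_add[OF sA sI1 oS])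
    then have "smooth_on S (\<lambda>p. Aphi A \<phi> (fst p) (snd p))"
      by (rule smooth_cong[OF oS, rotated]) (auto simp: S_def Aphi_eq)
    then show ?thesis by (simp add: S_def)
  qed
  have tdot_A: "tdot A t x = frechet_derivative Ap (at (t, x)) (1, 0)" if "x \<in> Q" for t x
  proof -
    have g: "((\<lambda>s. (s, x)) has_vector_derivative (1, 0)) (at t)"
      by (auto intro!: derivative_eq_intros simp: has_vector_derivative_def)
    have "((\<lambda>s. Ap (s, x)) has_vector_derivative frechet_derivative Ap (at (t, x)) (1, 0)) (at t)"
      using chain_vd[OF g smooth_diff_at[OF sA oS inS[OF that]]] by simp
    moreover have "(\<lambda>s. Ap (s, x)) = (\<lambda>s. A s x)" by (simp add: Ap_def)
    ultimately show ?thesis unfolding tdot_def by (simp add: vector_derivative_at)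
  qed
  have tdot_Aphi: "tdot (Aphi A \<phi>) t x = tdot A t x + kk (t, x)" if x: "x \<in> Q" for t x
  proof -
    have g: "((\<lambda>s. (s, x)) has_vector_derivative (1, 0)) (at t)"
      by (auto intro!: derivative_eq_intros simp: has_vector_derivative_def)
    have a: "((\<lambda>s. Ap (s, x)) has_vector_derivative frechet_derivative Ap (at (t, x)) (1, 0)) (at t)"
      using chain_vd[OF g smooth_diff_at[OF sA oS inS[OF x]]] by simp
    have b: "((\<lambda>s. oint 0 s (\<lambda>u. kk (u, x))) has_vector_derivative kk (t, x)) (at t)"
      using ftcQ[OF skk[unfolded S_def] Q_open x] .
    have "((\<lambda>s. Ap (s, x) + oint 0 s (\<lambda>u. kk (u, x))) has_vector_derivative
            frechet_derivative Ap (at (t, x)) (1, 0) + kk (t, x)) (at t)"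
      by (rule has_vector_derivative_add[OF a b])
    moreover have "(\<lambda>s. Aphi A \<phi> s x) = (\<lambda>s. Ap (s, x) + oint 0 s (\<lambda>u. kk (u, x)))"
      using Aphi_eq[OF x] by (simp add: I1_def)
    ultimately have "tdot (Aphi A \<phi>) t x = frechet_derivative Ap (at (t, x)) (1, 0) + kk (t, x)"
      unfolding tdot_def by (simp add: vector_derivative_at)
    then show ?thesis using tdot_A[OF x] by simp
  qed
  have kk_per: "kk (t + 1, x) = kk (t, x)" if x: "x \<in> Q" for t x
  proof -
    have "frechet_derivative (\<phi> (t + 1)) (at x) = frechet_derivative (\<phi> t) (at x)"
      by (rule fd_cong[OF Q_open x]) (use phi_periodic in simp)
    then have "grad (\<phi> (t + 1)) x = grad (\<phi> t) x" by (simp add: grad_def)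
    then show ?thesis using G1[OF x] by simp
  qed
  have C2: "\<forall>t. \<forall>x\<in>Q. tdot (Aphi A \<phi>) (t + 1) x = tdot (Aphi A \<phi>) t x"
    using tdot_Aphi tdA kk_per by simp
  have kk_eq: "kk = (\<lambda>p. (k1 p, k2 p))" by (simp add: kk_def[abs_def])
  have rot_Aphi: "rot (Aphi A \<phi> t) x = rot (A t) x" if x: "x \<in> Q" for t x
  proof -
    define DA where "DA v = frechet_derivative Ap (at (t, x)) (0, v)" for v
    define DG where "DG v = oint 0 t (\<lambda>s. frechet_derivative kk (at (s, x)) (0, v))" for v
    have dA0: "((\<lambda>y. Ap (t, y)) has_derivative DA) (at x)"
      unfolding DA_def[abs_def] by (rule partial_y[OF smooth_diff_at[OF sA oS inS[OF x]]])
    have eA: "(\<lambda>y. Ap (t, y)) = A t" by (simp add: Ap_def fun_eq_iff)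
    have dA: "(A t has_derivative DA) (at x)" using dA0 eA by simp
    have dG: "((\<lambda>y. oint 0 t (\<lambda>s. kk (s, y))) has_derivative DG) (at x)"
      unfolding DG_def[abs_def] by (rule leibQ[OF skk[unfolded S_def] Q_open x])
    have dP0: "((\<lambda>y. A t y + oint 0 t (\<lambda>s. kk (s, y))) has_derivative (\<lambda>v. DA v + DG v)) (at x)"
      by (rule has_derivative_add[OF dA dG])
    have dP: "(Aphi A \<phi> t has_derivative (\<lambda>v. DA v + DG v)) (at x)"
      by (rule has_derivative_transform_within_open[OF dP0 Q_open x]) (simp add: Aphi_eq Ap_def I1_def)
    have f1: "frechet_derivative (\<lambda>y. snd (Aphi A \<phi> t y)) (at x) = (\<lambda>v. snd (DA v + DG v))"
      by (rule frechet_derivative_at[symmetric]) (rule has_derivative_snd[OF dP])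
    have f2: "frechet_derivative (\<lambda>y. fst (Aphi A \<phi> t y)) (at x) = (\<lambda>v. fst (DA v + DG v))"
      by (rule frechet_derivative_at[symmetric]) (rule has_derivative_fst[OF dP])
    have f3: "frechet_derivative (\<lambda>y. snd (A t y)) (at x) = (\<lambda>v. snd (DA v))"
      by (rule frechet_derivative_at[symmetric]) (rule has_derivative_snd[OF dA])
    have f4: "frechet_derivative (\<lambda>y. fst (A t y)) (at x) = (\<lambda>v. fst (DA v))"
      by (rule frechet_derivative_at[symmetric]) (rule has_derivative_fst[OF dA])
    have cont: "continuous_on (closed_segment 0 t) (\<lambda>s. frechet_derivative kk (at (s, x)) (0, v))" for v
      by (rule continuous_on_subset[OF cont_slice_t[OF smooth_dderiv[OF skk[unfolded S_def]] Q_open x]]) simp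
    have fdkk: "frechet_derivative kk (at (s, x)) v = (frechet_derivative k1 (at (s, x)) v, frechet_derivative k2 (at (s, x)) v)" for s v
      unfolding kk_eq
      by (subst fd_pair[OF smooth_diff_at[OF sk1 oS inS[OF x]] smooth_diff_at[OF sk2 oS inS[OF x]]]) simp
    have sw: "frechet_derivative k2 (at (s, x)) (0, (1, 0)) = frechet_derivative k1 (at (s, x)) (0, (0, 1))" for s
    proof -
      have "iter_dderiv [(0, (1, 0)), (0, (0, 1))] Phi (s, x) = iter_dderiv [(0, (0, 1)), (0, (1, 0))] Phi (s, x)"
        by (rule schwarz[OF sPhi oS inS[OF x]])
      then show ?thesis by (simp add: k1_def[abs_def] k2_def[abs_def])
    qed
    have "snd (DG (1, 0)) = oint 0 t (\<lambda>s. snd (frechet_derivative kk (at (s, x)) (0, (1, 0))))"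
      unfolding DG_def by (rule oint_linear[OF bounded_linear_snd cont])
    also have "\<dots> = oint 0 t (\<lambda>s. fst (frechet_derivative kk (at (s, x)) (0, (0, 1))))"
      by (simp add: fdkk sw)
    also have "\<dots> = fst (DG (0, 1))"
      unfolding DG_def by (rule oint_linear[OF bounded_linear_fst cont, symmetric])
    finally have "snd (DG (1, 0)) = fst (DG (0, 1))" .
    then show ?thesis unfolding rot_def f1 f2 f3 f4 by simp
  qed
  have C3: "\<forall>t. \<forall>x\<in>Q. rot (Aphi A \<phi> (t + 1)) x = rot (Aphi A \<phi> t) x"
    using rot_Aphi rotA by simp
  have C4: "\<exists>f'. smooth_on (UNIV \<times> Q) (\<lambda>p. f' (fst p) (snd p)) \<and>
        (\<forall>t. \<forall>x\<in>Q. Aphi A \<phi> (t + 1) x - Aphi A \<phi> t x = grad (f' t) x)"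
  proof (intro exI conjI)
    show "smooth_on (UNIV \<times> Q) (\<lambda>p. (\<lambda>t y. f t y + I2 Phi (t, y)) (fst p) (snd p))"
    proof -
      have "smooth_on S (\<lambda>p. fj p + I2 Phi p)"
        by (rule smooth_add[OF sf _ oS]) (use smooth_I2[OF Q_open] sPhi in \<open>simp add: S_def\<close>)
      then show ?thesis by (simp add: S_def fj_def)
    qed
    show "\<forall>t. \<forall>x\<in>Q. Aphi A \<phi> (t + 1) x - Aphi A \<phi> t x = grad ((\<lambda>t y. f t y + I2 Phi (t, y)) t) x"
    proof (intro allI ballI)
      fix t x assume x: "x \<in> Q"
      define g where "g = (\<lambda>s. kk (s, x))"
      have cg: "continuous_on UNIV g" unfolding g_def by (rule cont_slice_t[OF skk[unfolded S_def] Q_open x])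
      have pg: "g (s + 1) = g s" for s unfolding g_def using kk_per[OF x] by simp
      have "Aphi A \<phi> (t + 1) x - Aphi A \<phi> t x = (A (t + 1) x - A t x) + (oint 0 (t + 1) g - oint 0 t g)"
        by (simp add: Aphi_eq[OF x] Ap_def I1_def g_def)
      also have "\<dots> = grad (f t) x + oint 0 1 g"
        using fA x oint_shift_periodic[OF cg pg, of t] by simp
      finally have L: "Aphi A \<phi> (t + 1) x - Aphi A \<phi> t x = grad (f t) x + oint 0 1 g" .
      have d1: "((\<lambda>y. fj (t, y)) has_derivative (\<lambda>v. frechet_derivative fj (at (t, x)) (0, v))) (at x)"
        by (rule partial_y[OF smooth_diff_at[OF sf oS inS[OF x]]])
      have d2: "((\<lambda>y. oint 0 1 (\<lambda>s. Phi (s, y))) has_derivative (\<lambda>v. oint 0 1 (\<lambda>s. frechet_derivative Phi (at (s, x)) (0, v)))) (at x)"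
        by (rule leibQ[OF sPhi[unfolded S_def] Q_open x])
      have "((\<lambda>y. fj (t, y) + oint 0 1 (\<lambda>s. Phi (s, y))) has_derivative
          (\<lambda>v. frechet_derivative fj (at (t, x)) (0, v) + oint 0 1 (\<lambda>s. frechet_derivative Phi (at (s, x)) (0, v)))) (at x)"
        by (rule has_derivative_add[OF d1 d2])
      moreover have "(\<lambda>y. fj (t, y) + oint 0 1 (\<lambda>s. Phi (s, y))) = (\<lambda>t y. f t y + I2 Phi (t, y)) t"
        by (simp add: fun_eq_iff fj_def I2_def)
      ultimately have fd1: "frechet_derivative ((\<lambda>t y. f t y + I2 Phi (t, y)) t) (at x) =
          (\<lambda>v. frechet_derivative fj (at (t, x)) (0, v) + oint 0 1 (\<lambda>s. frechet_derivative Phi (at (s, x)) (0, v)))"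
        by (simp add: frechet_derivative_at[symmetric])
      have "f t = (\<lambda>y. fj (t, y))" by (simp add: fj_def fun_eq_iff)
      then have fd2: "frechet_derivative (f t) (at x) = (\<lambda>v. frechet_derivative fj (at (t, x)) (0, v))"
        using pfd[OF sf x, of t] by simp
      have cg1: "continuous_on (closed_segment 0 1) g" by (rule continuous_on_subset[OF cg]) simp
      have o1: "fst (oint 0 1 g) = oint 0 1 (\<lambda>s. frechet_derivative Phi (at (s, x)) (0, (1, 0)))"
        using oint_linear[OF bounded_linear_fst cg1] by (simp add: g_def kk_def k1_def)
      have o2: "snd (oint 0 1 g) = oint 0 1 (\<lambda>s. frechet_derivative Phi (at (s, x)) (0, (0, 1)))"
        using oint_linear[OF bounded_linear_snd cg1] by (simp add: g_def kk_def k2_def)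
      show "Aphi A \<phi> (t + 1) x - Aphi A \<phi> t x = grad ((\<lambda>t y. f t y + I2 Phi (t, y)) t) x"
        unfolding L grad_def fd1 fd2 by (simp add: prod_eq_iff o1 o2)
    qed
  qed
  have TP: "twisted_periodic_vp Q (Aphi A \<phi>)"
    unfolding twisted_periodic_vp_def using C1 C2 C3 C4 by blast
  show ?thesis
  proof (intro conjI TP allI impI)
    fix I :: "real set" and q :: "real \<Rightarrow> real \<times> real"
    assume "open I" "smooth_on I q" and qI: "q ` I \<subseteq> Q"
    have g0: "grad (\<lambda>_. 0) y = 0" for y by (simp add: grad_def zero_prod_def)
    have eq: "solves_eq A \<phi> q t = solves_eq (Aphi A \<phi>) (\<lambda>_ _. 0) q t" if "t \<in> I" for t
    proof -
      have x: "q t \<in> Q" using that qI by auto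
      show ?thesis unfolding solves_eq_def rot_Aphi[OF x] tdot_Aphi[OF x] G1[OF x]
        by (simp add: g0 algebra_simps)
    qed
    show "(\<forall>t\<in>I. solves_eq A \<phi> q t) = (\<forall>t\<in>I. solves_eq (Aphi A \<phi>) (\<lambda>_ _. 0) q t)"
      using eq by blast
  qed
qed



end
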